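(* Let $(X,d)$ be a proper metric space and $X+_fW$ a Hausdorff compactification of $X$ that is perspective with respect to the bounded coarse structure $\varepsilon_d$. Then for every $u\in\mathfrak{U}_f$ and every $t>0$ there is a bounded set $S\subseteq X$ such that $(x,y)\in u$ for all $x,y\in X\setminus S$ with $d(x,y)<t$.
   Context: $X+_fW$ is $X\sqcup W$ with closed sets the $D$ with $D\cap X$ closed in $X$, $D\cap W$ closed in $W$, $f(D\cap X)\subseteq D$, for an admissible $f$ (sending $\emptyset$ to $\emptyset$, preserving finite unions); a Hausdorff compactification means it is compact Hausdorff with $X$ dense. $\mathfrak{U}_f$ is its unique compatible uniform structure. $\varepsilon_d=\{e\subseteq X\times X:\sup_{(x,y)\in e}d(x,y)<\infty\}$. Perspective means every $e\in\varepsilon_d$ satisfies $\mathrm{Cl}_{(X+_fW)^2}(e)\cap((X+_fW)^2-X^2)\subseteq\{(p,p):p\in W\}$. *)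

theory Defs
  imports "HOL-Analysis.Analysis"
begin

definition proper_metric :: "'a set \<Rightarrow> ('a \<Rightarrow> 'a \<Rightarrow> real) \<Rightarrow> bool" where
  "proper_metric X d \<longleftrightarrow> Metric_space X d \<and>
     (\<forall>S. S \<subseteq> X \<and> Metric_space.mbounded X d S \<and> closedin (Metric_space.mtopology X d) S
          \<longrightarrow> compactin (Metric_space.mtopology X d) S)"

definition admissible :: "'a set \<Rightarrow> 'b set \<Rightarrow> ('a set \<Rightarrow> 'b set) \<Rightarrow> bool" where
  "admissible X W f \<longleftrightarrow> (\<forall>A. A \<subseteq> X \<longrightarrow> f A \<subseteq> W) \<and> f {} = {} \<and>
     (\<forall>A B. A \<subseteq> X \<longrightarrow> B \<subseteq> X \<longrightarrow> f (A \<union> B) = f A \<union> f B)"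

definition sum_carrier :: "'a set \<Rightarrow> 'b set \<Rightarrow> ('a + 'b) set" where
  "sum_carrier X W = Inl ` X \<union> Inr ` W"

definition sumf_closed :: "'a topology \<Rightarrow> 'b topology \<Rightarrow> ('a set \<Rightarrow> 'b set) \<Rightarrow> ('a + 'b) set \<Rightarrow> bool" where
  "sumf_closed TX TW f D \<longleftrightarrow> D \<subseteq> sum_carrier (topspace TX) (topspace TW) \<and>
     closedin TX {x. Inl x \<in> D} \<and> closedin TW {w. Inr w \<in> D} \<and>
     Inr ` f {x. Inl x \<in> D} \<subseteq> D"

definition sumf_topology :: "'a topology \<Rightarrow> 'b topology \<Rightarrow> ('a set \<Rightarrow> 'b set) \<Rightarrow> ('a + 'b) topology" where
  "sumf_topology TX TW f = topology (\<lambda>U. U \<subseteq> sum_carrier (topspace TX) (topspace TW) \<and>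
      sumf_closed TX TW f (sum_carrier (topspace TX) (topspace TW) - U))"

definition hausdorff_compactification :: "'a topology \<Rightarrow> 'b topology \<Rightarrow> ('a set \<Rightarrow> 'b set) \<Rightarrow> bool" where
  "hausdorff_compactification TX TW f \<longleftrightarrow>
     compact_space (sumf_topology TX TW f) \<and> Hausdorff_space (sumf_topology TX TW f) \<and>
     (sumf_topology TX TW f) closure_of (Inl ` topspace TX) = topspace (sumf_topology TX TW f)"

text \<open>The unique compatible uniform structure of a compact Hausdorff space:
  the entourages are exactly the neighbourhoods of the diagonal in the square.\<close>
definition compact_uniformity :: "'c topology \<Rightarrow> ('c \<times> 'c) set set" where
  "compact_uniformity T = {u. u \<subseteq> topspace T \<times> topspace T \<and>
      (\<exists>V. openin (prod_topology T T) V \<and> Id_on (topspace T) \<subseteq> V \<and> V \<subseteq> u)}"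

definition bounded_coarse :: "'a set \<Rightarrow> ('a \<Rightarrow> 'a \<Rightarrow> real) \<Rightarrow> ('a \<times> 'a) set set" where
  "bounded_coarse X d = {e. e \<subseteq> X \<times> X \<and> (\<exists>B. \<forall>(x,y)\<in>e. d x y \<le> B)}"

definition perspective :: "'a set \<Rightarrow> ('a \<Rightarrow> 'a \<Rightarrow> real) \<Rightarrow> 'b topology \<Rightarrow> ('a set \<Rightarrow> 'b set) \<Rightarrow> bool" where
  "perspective X d TW f \<longleftrightarrow>
     (\<forall>e\<in>bounded_coarse X d.
        (prod_topology (sumf_topology (Metric_space.mtopology X d) TW f)
                       (sumf_topology (Metric_space.mtopology X d) TW f))
          closure_of ((\<lambda>(x,y). (Inl x, Inl y)) ` e)
        \<inter> ((sum_carrier X (topspace TW) \<times> sum_carrier X (topspace TW)) - (Inl ` X \<times> Inl ` X))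
        \<subseteq> {(Inr p, Inr p) | p. p \<in> topspace TW})"

end

theory Submission imports Defs begin

lemma adm_sub: "admissible X W f \<Longrightarrow> A \<subseteq> X \<Longrightarrow> f A \<subseteq> W"
  unfolding admissible_def by (elim conjE allE impE) assumption+

lemma adm_empty: "admissible X W f \<Longrightarrow> f {} = {}"
  unfolding admissible_def by (elim conjE)

lemma adm_un: "admissible X W f \<Longrightarrow> A \<subseteq> X \<Longrightarrow> B \<subseteq> X \<Longrightarrow> f (A \<union> B) = f A \<union> f B"
  unfolding admissible_def by (elim conjE allE impE) assumption+

lemma adm_mono:
  assumes "admissible X W f" "A \<subseteq> B" "B \<subseteq> X"
  shows "f A \<subseteq> f B"
proof -
  have "f B = f (A \<union> B)" using assms(2) by (simp add: Un_absorb1)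
  also have "\<dots> = f A \<union> f B" by (rule adm_un[OF assms(1) subset_trans[OF assms(2,3)] assms(3)])
  finally show ?thesis by blast
qed

lemma sumf_istopology:
  fixes TX :: "'a topology" and TW :: "'b topology"
  assumes adm: "admissible (topspace TX) (topspace TW) f"
  shows "istopology (\<lambda>U. U \<subseteq> sum_carrier (topspace TX) (topspace TW) \<and>
      sumf_closed TX TW f (sum_carrier (topspace TX) (topspace TW) - U))"
  unfolding istopology_def
proof (rule conjI; intro allI impI)
  let ?C = "sum_carrier (topspace TX) (topspace TW)"
  fix S T
  assume S: "S \<subseteq> ?C \<and> sumf_closed TX TW f (?C - S)" and T: "T \<subseteq> ?C \<and> sumf_closed TX TW f (?C - T)"
  have e1: "{x. Inl x \<in> ?C - S \<inter> T} = {x. Inl x \<in> ?C - S} \<union> {x. Inl x \<in> ?C - T}" by blast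
  have e2: "{x. Inr x \<in> ?C - S \<inter> T} = {x. Inr x \<in> ?C - S} \<union> {x. Inr x \<in> ?C - T}" by blast
  have sub1: "{x. Inl x \<in> ?C - S} \<subseteq> topspace TX" "{x. Inl x \<in> ?C - T} \<subseteq> topspace TX"
    using S T unfolding sumf_closed_def by (auto dest: closedin_subset)
  have "f {x. Inl x \<in> ?C - S \<inter> T} = f {x. Inl x \<in> ?C - S} \<union> f {x. Inl x \<in> ?C - T}"
    unfolding e1 by (rule adm_un[OF adm sub1])
  then show "S \<inter> T \<subseteq> ?C \<and> sumf_closed TX TW f (?C - S \<inter> T)"
    using S T unfolding sumf_closed_def e1 e2 by (auto intro: closedin_Un)
next
  let ?C = "sum_carrier (topspace TX) (topspace TW)"
  fix K
  assume K: "\<forall>U\<in>K. U \<subseteq> ?C \<and> sumf_closed TX TW f (?C - U)"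
  have o1: "openin TX (\<Union>k\<in>K. {x. Inl x \<in> k})"
  proof (rule openin_Union, clarify)
    fix k assume "k \<in> K"
    then have c: "closedin TX {x. Inl x \<in> ?C - k}" and kc: "k \<subseteq> ?C" using K unfolding sumf_closed_def by auto
    have "{x. Inl x \<in> k} = topspace TX - {x. Inl x \<in> ?C - k}" using kc unfolding sum_carrier_def by auto
    then show "openin TX {x. Inl x \<in> k}" using c by auto
  qed
  have o2: "openin TW (\<Union>k\<in>K. {x. Inr x \<in> k})"
  proof (rule openin_Union, clarify)
    fix k assume "k \<in> K"
    then have c: "closedin TW {x. Inr x \<in> ?C - k}" and kc: "k \<subseteq> ?C" using K unfolding sumf_closed_def by auto
    have "{x. Inr x \<in> k} = topspace TW - {x. Inr x \<in> ?C - k}" using kc unfolding sum_carrier_def by auto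
    then show "openin TW {x. Inr x \<in> k}" using c by auto
  qed
  have e1: "{x. Inl x \<in> ?C - \<Union>K} = topspace TX - (\<Union>k\<in>K. {x. Inl x \<in> k})" unfolding sum_carrier_def by auto
  have e2: "{x. Inr x \<in> ?C - \<Union>K} = topspace TW - (\<Union>k\<in>K. {x. Inr x \<in> k})" unfolding sum_carrier_def by auto
  have fc: "Inr ` f {x. Inl x \<in> ?C - \<Union>K} \<subseteq> ?C - \<Union>K"
  proof
    fix z :: "'a + 'b" assume "z \<in> Inr ` f {x. Inl x \<in> ?C - \<Union>K}"
    then obtain w where z: "z = Inr w" and w: "w \<in> f {x. Inl x \<in> ?C - \<Union>K}" by auto
    have "{x. Inl x \<in> ?C - \<Union>K} \<subseteq> topspace TX" unfolding sum_carrier_def by auto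
    then have "w \<in> topspace TW" using w adm_sub[OF adm] by blast
    then have "z \<in> ?C" using z unfolding sum_carrier_def by auto
    moreover have "z \<notin> k" if "k \<in> K" for k
    proof -
      have kk: "sumf_closed TX TW f (?C - k)" using K that by auto
      have "f {x. Inl x \<in> ?C - \<Union>K} \<subseteq> f {x. Inl x \<in> ?C - k}"
        apply (rule adm_mono[OF adm]) using that unfolding sum_carrier_def by auto
      then have "z \<in> ?C - k" using kk w z unfolding sumf_closed_def by blast
      then show ?thesis by blast
    qed
    ultimately show "z \<in> ?C - \<Union>K" by blast
  qed
  show "\<Union>K \<subseteq> ?C \<and> sumf_closed TX TW f (?C - \<Union>K)"
    using K o1 o2 fc unfolding sumf_closed_def e1 e2 by auto
qed

lemma openin_sumf:
  fixes TX :: "'a topology" and TW :: "'b topology"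
  assumes adm: "admissible (topspace TX) (topspace TW) f"
  shows "openin (sumf_topology TX TW f) U \<longleftrightarrow> U \<subseteq> sum_carrier (topspace TX) (topspace TW) \<and>
      sumf_closed TX TW f (sum_carrier (topspace TX) (topspace TW) - U)"
  unfolding sumf_topology_def using topology_inverse'[OF sumf_istopology[OF adm]] by simp

lemma topspace_sumf:
  fixes TX :: "'a topology" and TW :: "'b topology"
  assumes adm: "admissible (topspace TX) (topspace TW) f"
  shows "topspace (sumf_topology TX TW f) = sum_carrier (topspace TX) (topspace TW)"
proof -
  have "openin (sumf_topology TX TW f) (sum_carrier (topspace TX) (topspace TW))"
    unfolding openin_sumf[OF adm] sumf_closed_def using adm_empty[OF adm] by auto
  then have "sum_carrier (topspace TX) (topspace TW) \<subseteq> topspace (sumf_topology TX TW f)"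
    by (rule openin_subset)
  moreover have "topspace (sumf_topology TX TW f) \<subseteq> sum_carrier (topspace TX) (topspace TW)"
    using openin_topspace[of "sumf_topology TX TW f"] unfolding openin_sumf[OF adm] by blast
  ultimately show ?thesis by blast
qed

lemma openin_sumf_Inl:
  fixes TX :: "'a topology" and TW :: "'b topology"
  assumes adm: "admissible (topspace TX) (topspace TW) f" and G: "openin TX G"
  shows "openin (sumf_topology TX TW f) (Inl ` G)"
  unfolding openin_sumf[OF adm]
proof
  let ?C = "sum_carrier (topspace TX) (topspace TW)"
  show "Inl ` G \<subseteq> ?C" using openin_subset[OF G] unfolding sum_carrier_def by auto
  have e1: "{x. Inl x \<in> ?C - Inl ` G} = topspace TX - G" unfolding sum_carrier_def by auto
  have e2: "{x. Inr x \<in> ?C - Inl ` G} = topspace TW" unfolding sum_carrier_def by auto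
  have "f (topspace TX - G) \<subseteq> topspace TW" by (rule adm_sub[OF adm]) blast
  then show "sumf_closed TX TW f (?C - Inl ` G)"
    unfolding sumf_closed_def e1 e2 using G unfolding sum_carrier_def by auto
qed

theorem mainTheorem18:
  fixes X :: "'a set" and d :: "'a \<Rightarrow> 'a \<Rightarrow> real"
    and TW :: "'b topology" and f :: "'a set \<Rightarrow> 'b set"
  assumes "proper_metric X d"
    and "admissible X (topspace TW) f"
    and "hausdorff_compactification (Metric_space.mtopology X d) TW f"
    and "perspective X d TW f"
  shows "\<forall>u \<in> compact_uniformity (sumf_topology (Metric_space.mtopology X d) TW f).
           \<forall>t > 0. \<exists>S. S \<subseteq> X \<and> Metric_space.mbounded X d S \<and>
             (\<forall>x \<in> X - S. \<forall>y \<in> X - S. d x y < t \<longrightarrow> (Inl x, Inl y) \<in> u)"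
proof (intro ballI allI impI)
  fix u and t :: real
  assume uU: "u \<in> compact_uniformity (sumf_topology (Metric_space.mtopology X d) TW f)" and t: "t > 0"
  have MS: "Metric_space X d" using assms(1) unfolding proper_metric_def by blast
  define M where "M = Metric_space.mtopology X d"
  have tM: "topspace M = X" unfolding M_def using MS by (simp add: Metric_space.topspace_mtopology)
  have adm: "admissible (topspace M) (topspace TW) f" using assms(2) tM by simp
  define T where "T = sumf_topology M TW f"
  have tT: "topspace T = sum_carrier X (topspace TW)" unfolding T_def using topspace_sumf[OF adm] tM by simp
  define P where "P = prod_topology T T"
  have tP: "topspace P = sum_carrier X (topspace TW) \<times> sum_carrier X (topspace TW)"
    unfolding P_def using tT by simp
  obtain V where Vo: "openin P V" and Vd: "Id_on (topspace T) \<subseteq> V" and Vu: "V \<subseteq> u"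
    using uU unfolding compact_uniformity_def P_def T_def M_def by blast
  define e where "e = {(x,y). x \<in> X \<and> y \<in> X \<and> d x y < t \<and> (Inl x, Inl y) \<notin> V}"
  have eb: "e \<in> bounded_coarse X d"
    unfolding bounded_coarse_def e_def by (rule CollectI, rule conjI, blast, rule exI[of _ t], auto)
  define E where "E = (\<lambda>(x,y). (Inl x :: 'a + 'b, Inl y :: 'a + 'b)) ` e"
  have EP: "E \<subseteq> topspace P - V" unfolding E_def e_def tP sum_carrier_def by auto
  define C where "C = P closure_of E"
  have Ccl: "closedin P C" unfolding C_def by simp
  have CV: "C \<subseteq> topspace P - V" unfolding C_def
    by (rule closure_of_minimal[OF EP]) (rule closedin_diff[OF closedin_topspace Vo])
  have persp: "C \<inter> ((sum_carrier X (topspace TW) \<times> sum_carrier X (topspace TW)) - (Inl ` X \<times> Inl ` X))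
        \<subseteq> {(Inr p, Inr p) | p. p \<in> topspace TW}"
    unfolding C_def P_def T_def M_def E_def by (rule bspec[OF assms(4)[unfolded perspective_def] eb])
  have Csub: "C \<subseteq> Inl ` X \<times> Inl ` X"
  proof
    fix z assume zC: "z \<in> C"
    show "z \<in> Inl ` X \<times> Inl ` X"
    proof (rule ccontr)
      assume nz: "z \<notin> Inl ` X \<times> Inl ` X"
      have "z \<in> topspace P" using zC CV by blast
      then obtain p where z: "z = (Inr p, Inr p)" and p: "p \<in> topspace TW"
        using persp zC nz unfolding tP by blast
      have "z \<in> Id_on (topspace T)" unfolding z tT sum_carrier_def using p by auto
      then show False using Vd CV zC by blast
    qed
  qed
  have cT: "compact_space T" using assms(3) unfolding hausdorff_compactification_def T_def M_def by blast
  have cP: "compact_space P" unfolding P_def using cT by (simp add: compact_space_prod_topology)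
  have Ccp: "compactin P C" using closedin_compact_space[OF cP Ccl] .
  have Fcp: "compactin T (fst ` C)"
    using image_compactin[OF Ccp[unfolded P_def] continuous_map_fst] .
  have Fsub: "fst ` C \<subseteq> Inl ` X" using Csub by auto
  have Fcp2: "compactin (subtopology T (Inl ` X)) (fst ` C)"
    using Fcp Fsub by (simp add: compactin_subtopology)
  have cm: "continuous_map (subtopology T (Inl ` X)) M projl"
    unfolding continuous_map_def
  proof (intro conjI allI impI Pi_I)
    fix z assume "z \<in> topspace (subtopology T (Inl ` X))"
    then show "projl z \<in> topspace M" using tM by auto
  next
    fix U assume U: "openin M U"
    have "{z \<in> topspace (subtopology T (Inl ` X)). projl z \<in> U} = Inl ` U \<inter> Inl ` X"
      using openin_subset[OF U] tM tT unfolding sum_carrier_def by auto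
    moreover have "openin T (Inl ` U)" unfolding T_def by (rule openin_sumf_Inl[OF adm U])
    ultimately show "openin (subtopology T (Inl ` X)) {z \<in> topspace (subtopology T (Inl ` X)). projl z \<in> U}"
      by (auto simp: openin_subtopology)
  qed
  define S where "S = projl ` fst ` C"
  have Scp: "compactin M S" unfolding S_def using image_compactin[OF Fcp2 cm] .
  have SX: "S \<subseteq> X" using compactin_subset_topspace[OF Scp] tM by simp
  have Sb: "Metric_space.mbounded X d S"
    using Metric_space.compactin_imp_mbounded[OF MS] Scp unfolding M_def by blast
  have "\<forall>x \<in> X - S. \<forall>y \<in> X - S. d x y < t \<longrightarrow> (Inl x, Inl y) \<in> u"
  proof (intro ballI impI)
    fix x y assume x: "x \<in> X - S" and y: "y \<in> X - S" and dxy: "d x y < t"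
    show "(Inl x, Inl y) \<in> u"
    proof (rule ccontr)
      assume "(Inl x, Inl y) \<notin> u"
      then have "(x,y) \<in> e" using x y dxy Vu unfolding e_def by auto
      then have "(Inl x, Inl y) \<in> E" unfolding E_def by force
      moreover have "E \<subseteq> C" unfolding C_def by (rule closure_of_subset) (use EP in blast)
      ultimately have "(Inl x, Inl y) \<in> C" by blast
      then have "projl (Inl x :: 'a + 'b) \<in> S" unfolding S_def by force
      then show False using x by simp
    qed
  qed
  then show "\<exists>S. S \<subseteq> X \<and> Metric_space.mbounded X d S \<and>
             (\<forall>x \<in> X - S. \<forall>y \<in> X - S. d x y < t \<longrightarrow> (Inl x, Inl y) \<in> u)"
    using SX Sb by blast
qed

end
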